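(* There exists an infinite strictly increasing sequence of square-primes $A_1<A_2<A_3<\cdots$ such that the P-G triangle generated by $\mathfrak u=(A_1,A_2,A_3,\dots)$ has left edge $(b_0,b_1,b_2,\dots)$ satisfying $b_j=1$ for every odd index $j\ge 1$ (that is, every other element of the left edge, starting with the second one, equals $1$).
   Context: A square-prime (SP-number) is a positive integer of the form $k^2p$ with $k\ge 2$ an integer and $p$ a prime. For a finite or infinite sequence $\mathfrak u=(a_0,a_1,\dots)$ of non-negative integers, the P-G triangle generated by $\mathfrak u$ consists of the numbers $d_k^{(j)}$ defined by $d_k^{(0)}=a_k$ and $d_k^{(j+1)}=|d_{k+1}^{(j)}-d_k^{(j)}|$ for $j,k\ge 0$ (for a finite sequence $(a_0,\dots,a_{N-1})$ these are defined for $0\le k\le N-1-j$). Its left (western) edge is the sequence $b_j=d_0^{(j)}$, $j\ge 0$ (so $b_0=a_0$). *)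

theory Defs
  imports "HOL-Computational_Algebra.Primes"
begin

definition sq_prime :: "nat \<Rightarrow> bool" where
  "sq_prime n \<longleftrightarrow> (\<exists>k p::nat. k \<ge> 2 \<and> prime p \<and> n = k\<^sup>2 * p)"

primrec pg :: "(nat \<Rightarrow> nat) \<Rightarrow> nat \<Rightarrow> nat \<Rightarrow> nat" where
  "pg a 0 k = a k"
| "pg a (Suc j) k = (if pg a j (Suc k) \<ge> pg a j k then pg a j (Suc k) - pg a j k
                       else pg a j k - pg a j (Suc k))"

definition left_edge :: "(nat \<Rightarrow> nat) \<Rightarrow> nat \<Rightarrow> nat" where
  "left_edge a j = pg a j 0"

end

theory Submission
  imports Defs
begin

lemma pg_bound:
  assumes "mono a"
  shows "pg a j k \<le> a (k + j)"
proof (induction j arbitrary: k)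
  case 0
  then show ?case by simp
next
  case (Suc j)
  have h1: "pg a j (Suc k) \<le> a (k + Suc j)" using Suc[of "Suc k"] by simp
  have "a (k + j) \<le> a (k + Suc j)" using assms by (simp add: monoD)
  then have h2: "pg a j k \<le> a (k + Suc j)" using Suc[of k] by simp
  show ?case using h1 h2 by auto
qed

lemma step:
  fixes a :: "nat \<Rightarrow> nat" and N :: nat
  assumes mono: "mono a" and N1: "N \<ge> 1"
    and inv: "\<forall>i\<le>N. pg a (2*i+1) (2*N - 2*i) = (if i=0 then 2 else if i=N then 1 else 0)"
    and pair: "a (2*N+3) = a (2*N+2) + 2"
    and big: "(2*N+2) * a (2*N+1) + 2 \<le> a (2*N+2)"
  shows "\<forall>i\<le>N+1. pg a (2*i+1) (2*(N+1) - 2*i) = (if i=0 then 2 else if i=N+1 then 1 else 0)"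
proof -
  define x where "x = a (2*N+2)"
  define M where "M = a (2*N+1)"
  define S where "S j = (\<Sum>i<j. pg a i (2*N+1-i))" for j
  have term_bd: "pg a i (2*N+1-i) \<le> M" if "i \<le> 2*N+1" for i
    using pg_bound[OF mono, of i "2*N+1-i"] that unfolding M_def by simp
  have S_bd: "S j \<le> j * M" if "j \<le> 2*N+2" for j
    using that
  proof (induction j)
    case 0 then show ?case by (simp add: S_def)
  next
    case (Suc j)
    have "S (Suc j) = S j + pg a j (2*N+1-j)" by (simp add: S_def)
    moreover have "pg a j (2*N+1-j) \<le> M" using term_bd Suc.prems by simp
    ultimately show ?case using Suc by simp
  qed
  have bigx: "(2*N+2) * M + 2 \<le> x" using big unfolding x_def M_def .
  have one: "pg a j (2*N+2-j) + S j = x" if "j \<le> 2*N+2" for j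
    using that
  proof (induction j)
    case 0 then show ?case by (simp add: S_def x_def)
  next
    case (Suc j)
    define k where "k = 2*N+1-j"
    have kk: "2*N+2-j = Suc k" "2*N+2 - Suc j = k" using Suc.prems by (simp_all add: k_def)
    have ih: "pg a j (Suc k) + S j = x" using Suc kk by simp
    have SS: "S (Suc j) = S j + pg a j k" by (simp add: S_def k_def)
    have "S (Suc j) \<le> (2*N+2) * M" using S_bd[OF Suc.prems] Suc.prems
      by (meson le_trans mult_le_mono1)
    then have "S j + pg a j k \<le> x" using SS bigx by simp
    then show ?case using ih SS kk by auto
  qed
  show ?thesis
  proof (intro allI impI)
    fix i assume "i \<le> N+1"
    then show "pg a (2*i+1) (2*(N+1) - 2*i) = (if i=0 then 2 else if i=N+1 then 1 else 0)"
    proof (induction i)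
      case 0
      have "pg a 1 (2*N+2) = 2" using pair by (simp add: numeral_eq_Suc)
      then show ?case by simp
    next
      case (Suc i)
      define c where "c = (if i=0 then 2 else 0::nat)"
      define v where "v = (if i=0 then 2 else if i=N then 1 else 0::nat)"
      have iN: "i \<le> N" using Suc.prems by simp
      have P1: "pg a (2*i+1) (Suc (2*N+1-2*i)) = c"
      proof -
        have "2*(N+1) - 2*i = Suc (2*N+1-2*i)" using iN by simp
        then show ?thesis using Suc.IH iN by (simp add: c_def)
      qed
      have P2: "pg a (2*i+1) (2*N+1-2*i) + S (2*i+1) = x"
        using one[of "2*i+1"] iN by (simp add: numeral_eq_Suc)
      have S1: "S (2*i+1) \<le> (2*N+1) * M"
      proof -
        have "(2*i+1) * M \<le> (2*N+1) * M" using iN by (intro mult_le_mono1) simp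
        moreover have "S (2*i+1) \<le> (2*i+1) * M" using S_bd[of "2*i+1"] iN by simp
        ultimately show ?thesis by (rule order.trans[rotated])
      qed
      have c2: "c \<le> 2" by (simp add: c_def)
      have E: "pg a (2*i+2) (2*N+1-2*i) + S (2*i+1) + c = x"
      proof -
        have "pg a (2*i+2) (2*N+1-2*i) = pg a (Suc (2*i+1)) (2*N+1-2*i)" by simp
        moreover have "pg a (Suc (2*i+1)) (2*N+1-2*i) = (if pg a (2*i+1) (2*N+1-2*i) \<le> pg a (2*i+1) (Suc (2*N+1-2*i)) then pg a (2*i+1) (Suc (2*N+1-2*i)) - pg a (2*i+1) (2*N+1-2*i) else pg a (2*i+1) (2*N+1-2*i) - pg a (2*i+1) (Suc (2*N+1-2*i)))"
          by (simp only: pg.simps)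
        moreover have "S (2*i+1) + 2 \<le> x" using S1 bigx by simp
        ultimately show ?thesis using P1 P2 c2 by auto
      qed
      have v_def2: "pg a (2*i+1) (2*N - 2*i) = v" using inv iN by (simp add: v_def)
      have S2: "S (2*i+2) = S (2*i+1) + v"
      proof -
        have "S (2*i+2) = S (2*i+1) + pg a (2*i+1) (2*N+1-(2*i+1))" by (simp add: S_def)
        then show ?thesis using v_def2 by simp
      qed
      have P3: "pg a (2*i+2) (2*N-2*i) + S (2*i+2) = x"
        using one[of "2*i+2"] iN by (simp add: numeral_eq_Suc)
      have F: "pg a (2*i+3) (2*N-2*i) = (if v \<ge> c then v - c else c - v)"
      proof -
        have e0: "2*i+3 = Suc (2*i+2)" by simp
        have e: "pg a (2*i+3) (2*N-2*i) = pg a (Suc (2*i+2)) (2*N-2*i)" by (simp only: e0)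
        have s: "Suc (2*N-2*i) = 2*N+1-2*i" using iN by simp
        define E' where "E' = pg a (2*i+2) (Suc (2*N-2*i))"
        define p3 where "p3 = pg a (2*i+2) (2*N-2*i)"
        have r: "pg a (Suc (2*i+2)) (2*N-2*i) = (if p3 \<le> E' then E' - p3 else p3 - E')"
          unfolding E'_def p3_def by (simp only: pg.simps)
        have "E' + S (2*i+1) + c = x" using E s unfolding E'_def by simp
        moreover have "p3 + S (2*i+1) + v = x" using P3 S2 unfolding p3_def by simp
        ultimately show ?thesis unfolding e r by auto
      qed
      have idx: "2*(N+1) - 2*Suc i = 2*N - 2*i" by simp
      have idx2: "2*Suc i+1 = 2*i+3" by simp
      show ?case unfolding idx idx2 F using N1 iN by (auto simp: v_def c_def)
    qed
  qed
qed

fun pl :: "nat \<Rightarrow> nat \<times> nat" where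
  "pl 0 = (5,4)"
| "pl (Suc i) = (case pl i of (l,k) \<Rightarrow> (5*l+6*k, 4*l+5*k))"

lemma pl_inv: "2*(fst (pl i))^2 = 3*(snd (pl i))^2 + 2 \<and> snd (pl i) \<ge> i+4 \<and> fst (pl i) \<ge> 2"
proof (induction i)
  case 0 then show ?case by simp
next
  case (Suc i)
  obtain l k where lk: "pl i = (l,k)" by fastforce
  have h: "2*l*l = 3*k*k + 2" "k \<ge> i+4" "l \<ge> 2" using Suc lk by (simp_all add: power2_eq_square)
  have "2*(5*l+6*k)*(5*l+6*k) = 3*(4*l+5*k)*(4*l+5*k) + 2"
    using h(1) by (simp add: algebra_simps)
  then have "2*((5*l+6*k)*(5*l+6*k)) = 3*((4*l+5*k)*(4*l+5*k)) + 2"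
    by (simp only: mult.assoc)
  then show ?case using h lk by (simp add: power2_eq_square)
qed

definition kk :: "nat \<Rightarrow> nat" where "kk i = snd (pl i)"

primrec Y :: "nat \<Rightarrow> nat" where
  "Y 0 = 4800"
| "Y (Suc m) = 3 * (kk (LEAST i. (2*m+5)*(Y m+2) \<le> 3*(kk i)^2))^2"

lemma Y_grow: "(2*m+5)*(Y m+2) \<le> Y (Suc m)"
proof -
  let ?B = "(2*m+5)*(Y m+2)"
  have "?B \<le> 3*(kk ?B)^2"
  proof -
    have "?B \<le> kk ?B" using pl_inv[of ?B] by (simp add: kk_def)
    also have "\<dots> \<le> (kk ?B)^2" by (simp add: power2_eq_square)
    finally show ?thesis by simp
  qed
  then have "\<exists>i. ?B \<le> 3*(kk i)^2" by blast
  from LeastI_ex[OF this] show ?thesis by simp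
qed

lemma Y_sq: "\<exists>i. Y m = 3*(kk i)^2"
proof (cases m)
  case 0
  have "pl 1 = (49,40)" by (simp add: numeral_eq_Suc)
  then have "kk 1 = 40" by (simp add: kk_def)
  then show ?thesis using 0 by (intro exI[of _ 1]) simp
next
  case (Suc n) then show ?thesis by auto
qed

lemma Y_sp: "sq_prime (Y m) \<and> sq_prime (Y m + 2)"
proof -
  obtain i where i: "Y m = 3*(kk i)^2" using Y_sq by blast
  have p: "2*(fst (pl i))^2 = 3*(kk i)^2 + 2" "kk i \<ge> 2" "fst (pl i) \<ge> 2"
    using pl_inv[of i] by (auto simp: kk_def)
  have "sq_prime (Y m)" unfolding sq_prime_def using i p
    by (intro exI[of _ "kk i"] exI[of _ 3]) auto
  moreover have "sq_prime (Y m + 2)" unfolding sq_prime_def using i p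
    by (intro exI[of _ "fst (pl i)"] exI[of _ 2]) auto
  ultimately show ?thesis by blast
qed

definition AA :: "nat \<Rightarrow> nat" where
  "AA n = (if n = 0 then 27 else if n = 1 then 28 else if even n then Y ((n-2) div 2) else Y ((n-3) div 2) + 2)"

lemma AA_even: "AA (2*m+2) = Y m" by (simp add: AA_def)
lemma AA_odd: "AA (2*m+3) = Y m + 2" by (simp add: AA_def)
lemma AA_0: "AA 0 = 27" and AA_1: "AA 1 = 28" by (simp_all add: AA_def)

lemma AA_sp: "sq_prime (AA n)"
proof -
  consider "n = 0" | "n = 1" | m where "n = 2*m+2" | m where "n = 2*m+3"
  proof -
    have "n = 0 \<or> n = 1 \<or> (\<exists>m. n = 2*m+2) \<or> (\<exists>m. n = (2::nat)*m+3)" by presburger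
    then show "(n = 0 \<Longrightarrow> thesis) \<Longrightarrow> (n = 1 \<Longrightarrow> thesis) \<Longrightarrow> (\<And>m. n = 2*m+2 \<Longrightarrow> thesis) \<Longrightarrow> (\<And>m. n = 2*m+3 \<Longrightarrow> thesis) \<Longrightarrow> thesis" by blast
  qed
  then show ?thesis
  proof cases
    case 1
    have "prime (3::nat)" by simp
    then show ?thesis unfolding sq_prime_def 1 AA_0 by (intro exI[of _ 3] exI[of _ 3]) auto
  next
    case 2
    have "prime (7::nat)" by simp
    then show ?thesis unfolding sq_prime_def 2 AA_1 by (intro exI[of _ 2] exI[of _ 7]) auto
  next
    case (3 m) then show ?thesis using Y_sp[of m] by (simp only: AA_even)
  next
    case (4 m) then show ?thesis using Y_sp[of m] by (simp only: AA_odd)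
  qed
qed

lemma AA_smono: "strict_mono AA"
proof (rule strict_mono_Suc_iff[THEN iffD2], intro allI)
  fix n
  have "n = 0 \<or> n = 1 \<or> (\<exists>m. n = 2*m+2) \<or> (\<exists>m. n = (2::nat)*m+3)" by presburger
  then show "AA n < AA (Suc n)"
  proof (elim disjE exE)
    assume "n = 0" then show ?thesis by (simp add: AA_def)
  next
    assume "n = 1" then show ?thesis by (simp add: AA_def)
  next
    fix m assume n: "n = 2*m+2"
    have "Suc n = 2*m+3" using n by simp
    then have "AA (Suc n) = Y m + 2" by (simp only: AA_odd)
    moreover have "AA n = Y m" using n by (simp only: AA_even)
    ultimately show ?thesis by simp
  next
    fix m assume n: "n = 2*m+3"
    have "Suc n = 2*(Suc m)+2" using n by simp
    moreover have "(2*m+5)*(Y m+2) \<le> Y (Suc m)" by (rule Y_grow)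
    moreover have "Y m + 2 < (2*m+5)*(Y m+2)"
    proof -
      have "(Y m+2)*1 < (Y m+2)*(2*m+5)" by (rule mult_strict_left_mono) simp_all
      then show ?thesis by (simp add: mult.commute)
    qed
    moreover have "AA n = Y m + 2" using n by (simp only: AA_odd)
    ultimately show ?thesis by (simp only: AA_even)
  qed
qed

lemma AA_inv: "N \<ge> 1 \<Longrightarrow> \<forall>i\<le>N. pg AA (2*i+1) (2*N - 2*i) = (if i=0 then 2 else if i=N then 1 else 0)"
proof (induction N rule: nat_induct_at_least)
  case base
  have v: "AA 0 = 27" "AA (Suc 0) = 28" "AA (Suc (Suc 0)) = 4800" "AA (Suc (Suc (Suc 0))) = 4802"
    by (simp_all add: AA_def)
  have a: "pg AA (Suc 0) (Suc (Suc 0)) = 2" by (simp add: v)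
  have b: "pg AA (Suc (Suc (Suc 0))) 0 = 1" by (simp add: v)
  show ?case
  proof (intro allI impI)
    fix i :: nat assume "i \<le> 1"
    then have "i = 0 \<or> i = 1" by auto
    then show "pg AA (2*i+1) (2*1 - 2*i) = (if i=0 then 2 else if i=1 then 1 else 0)"
    proof
      assume "i = 0"
      moreover have "(2::nat)*1 - 2*0 = Suc (Suc 0)" "(2::nat)*0+1 = Suc 0" by simp_all
      ultimately show ?thesis using a by (simp only:) simp
    next
      assume "i = 1"
      moreover have "(2::nat)*1 - 2*1 = 0" "(2::nat)*1+1 = Suc (Suc (Suc 0))" by simp_all
      ultimately show ?thesis using b by (simp only:) simp
    qed
  qed
next
  case (Suc N)
  have mono: "mono AA" using AA_smono strict_mono_mono by blast
  have pair: "AA (2*N+3) = AA (2*N+2) + 2" by (simp only: AA_even AA_odd)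
  obtain m where m: "N = Suc m" using Suc(1) by (cases N) auto
  have e1: "AA (2*N+1) = Y m + 2" using m AA_odd[of m] by (simp add: numeral_eq_Suc)
  have e2: "AA (2*N+2) = Y (Suc m)" using m AA_even[of "Suc m"] by simp
  have "(2*N+2) * AA (2*N+1) + 2 \<le> AA (2*N+2)"
    unfolding e1 e2 using Y_grow[of m] m by (simp add: algebra_simps)
  from step[OF mono Suc(1) Suc(2) pair this] show ?case by simp
qed

theorem theorem2p1:
  shows "\<exists>A :: nat \<Rightarrow> nat. strict_mono A \<and> (\<forall>i. sq_prime (A i)) \<and>
           (\<forall>j. odd j \<longrightarrow> left_edge A j = 1)"
proof (intro exI[of _ AA] conjI allI impI)
  show "strict_mono AA" by (rule AA_smono)
  fix i show "sq_prime (AA i)" by (rule AA_sp)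
next
  fix j :: nat assume "odd j"
  then obtain N where j: "j = 2*N+1" by (metis oddE)
  show "left_edge AA j = 1"
  proof (cases N)
    case 0
    then have "j = Suc 0" using j by simp
    then have "left_edge AA j = (if AA 0 \<le> AA (Suc 0) then AA (Suc 0) - AA 0 else AA 0 - AA (Suc 0))"
      by (simp only: left_edge_def pg.simps)
    then show ?thesis by (simp add: AA_def)
  next
    case (Suc m)
    then have "N \<ge> 1" by simp
    from AA_inv[OF this] have "pg AA (2*N+1) (2*N - 2*N) = (if N=0 then 2 else if N=N then 1 else 0)"
      by blast
    then have "pg AA (2*N+1) 0 = 1" using Suc by (simp del: pg.simps)
    then show ?thesis using j by (simp del: pg.simps add: left_edge_def)
  qed
qed

end
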